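(* Let $V$ be a finite set of numeric variables, let $t$ be a linear term over $V$, and let $a \in \mathbb{R} \cup \{-\infty\}$, $b \in \mathbb{R} \cup \{\infty\}$ with $a \leq b$. Let $t' := t[V \mapsto V']$ and $\epsilon > 0$. Define $\mathit{base} := (a \leq t \leq b)$, $\mathit{conc} := \top$, $\mathit{stay} := (a \leq t' \leq b) \lor (t < a \land t \leq t' \leq b) \lor (t > b \land t \geq t' \geq a)$, and $\mathit{step} := (a \leq t' \leq b) \lor (t < a \land t + \epsilon \leq t' \leq b) \lor (t > b \land t - \epsilon \geq t' \geq a)$. Then $(\mathit{base}, \mathit{stay}, \mathit{step}, \mathit{conc})$ is a GAL over $V$.
   Context: The theory $T$ is linear arithmetic. For a set of variables $X$, $\mathcal{A}(X)$ denotes the set of assignments to $X$. $X' = \{x' \mid x \in X\}$ is a disjoint primed copy of $X$; for $\nu \in \mathcal{A}(X)$, $\nu' \in \mathcal{A}(X')$ is given by $\nu'(x') = \nu(x)$; for $\nu_1,\nu_2 \in \mathcal{A}(X)$, $\langle \nu_1,\nu_2\rangle := \nu_1 \uplus \nu_2'$. $\nu \models_T \alpha$ denotes entailment in $T$. $t[V\mapsto V']$ replaces each $v\in V$ by $v'$. A generalized acceleration lemma (GAL) over $V$ is a tuple $(\mathit{base}, \mathit{stay}, \mathit{step}, \mathit{conc})$ of first-order formulas with $\mathit{base}, \mathit{conc}$ having free variables in $V$ and $\mathit{stay}, \mathit{step}$ having free variables in $V \cup V'$, such that: (I) for every sequence $\alpha \in \mathcal{A}(V)^\omega$ with $\alpha[0]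 \models_T \mathit{conc}$, if (a) for all $i$, $\langle\alpha[i],\alpha[i+1]\rangle \models_T \mathit{step} \lor \mathit{stay}$, and (b) for all $i$ there is $j \ge i$ with $\langle\alpha[j],\alpha[j+1]\rangle \models_T \mathit{step}$, then there is $k$ with $\alpha[k] \models_T \mathit{base}$; and (II) for all $\nu,\nu' \in \mathcal{A}(V)$ with $\nu \models_T \mathit{conc}$ and $\langle \nu,\nu'\rangle \models_T \mathit{step}\lor\mathit{stay}$, we have $\nu' \models_T \mathit{conc}$. Comparisons with $\pm\infty$ are interpreted in the extended reals (e.g. $-\infty \le t$ is always true). *)

theory Defs
  imports Complex_Main "HOL-Library.Extended_Real"
begin

text \<open>Assignments are total maps from variable names to reals; a formula over a finite
variable set V is modelled semantically as a predicate on assignments that only depends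
on the values of the variables in V. Two-state formulas (over V and V') take the pair
of the unprimed and primed assignment.\<close>

definition depends_on1 :: "'v set \<Rightarrow> (('v \<Rightarrow> real) \<Rightarrow> bool) \<Rightarrow> bool" where
  "depends_on1 V P \<longleftrightarrow> (\<forall>\<nu> \<mu>. (\<forall>x\<in>V. \<nu> x = \<mu> x) \<longrightarrow> P \<nu> = P \<mu>)"

definition depends_on2 :: "'v set \<Rightarrow> (('v \<Rightarrow> real) \<Rightarrow> ('v \<Rightarrow> real) \<Rightarrow> bool) \<Rightarrow> bool" where
  "depends_on2 V R \<longleftrightarrow> (\<forall>\<nu>1 \<nu>2 \<mu>1 \<mu>2. (\<forall>x\<in>V. \<nu>1 x = \<mu>1 x \<and> \<nu>2 x = \<mu>2 x)
      \<longrightarrow> R \<nu>1 \<nu>2 = R \<mu>1 \<mu>2)"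

definition lin_term :: "'v set \<Rightarrow> real \<Rightarrow> ('v \<Rightarrow> real) \<Rightarrow> ('v \<Rightarrow> real) \<Rightarrow> real" where
  "lin_term V c0 c \<nu> = c0 + (\<Sum>x\<in>V. c x * \<nu> x)"

definition is_GAL ::
  "'v set \<Rightarrow> (('v \<Rightarrow> real) \<Rightarrow> bool) \<Rightarrow> (('v \<Rightarrow> real) \<Rightarrow> ('v \<Rightarrow> real) \<Rightarrow> bool)
     \<Rightarrow> (('v \<Rightarrow> real) \<Rightarrow> ('v \<Rightarrow> real) \<Rightarrow> bool) \<Rightarrow> (('v \<Rightarrow> real) \<Rightarrow> bool) \<Rightarrow> bool" where
  "is_GAL V base stay step conc \<longleftrightarrow>
     depends_on1 V base \<and> depends_on1 V conc \<and> depends_on2 V stay \<and> depends_on2 V step \<and>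
     (\<forall>\<alpha> :: nat \<Rightarrow> ('v \<Rightarrow> real).
        conc (\<alpha> 0) \<and>
        (\<forall>i. step (\<alpha> i) (\<alpha> (Suc i)) \<or> stay (\<alpha> i) (\<alpha> (Suc i))) \<and>
        (\<forall>i. \<exists>j\<ge>i. step (\<alpha> j) (\<alpha> (Suc j)))
        \<longrightarrow> (\<exists>k. base (\<alpha> k))) \<and>
     (\<forall>\<nu> \<nu>'. conc \<nu> \<and> (step \<nu> \<nu>' \<or> stay \<nu> \<nu>') \<longrightarrow> conc \<nu>')"

end

theory Submission
  imports Defs
begin


lemma unbounded_aux:
  fixes f :: "nat \<Rightarrow> real"
  assumes e: "\<epsilon> > 0" and bd: "\<And>i. f i < A" and mo: "\<And>i. f i \<le> f (Suc i)"
    and inf: "\<And>i. \<exists>j\<ge>i. f j + \<epsilon> \<le> f (Suc j)"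
  shows False
proof -
  have inc: "incseq f" using mo by (simp add: incseq_SucI)
  have "\<exists>i. f i \<ge> f 0 + real n * \<epsilon>" for n
  proof (induction n)
    case 0 show ?case by auto
  next
    case (Suc n)
    then obtain i where i: "f i \<ge> f 0 + real n * \<epsilon>" by auto
    obtain j where j: "j \<ge> i" "f j + \<epsilon> \<le> f (Suc j)" using inf by blast
    have "f i \<le> f j" using inc j(1) by (simp add: incseq_def)
    then have "f (Suc j) \<ge> f 0 + real (Suc n) * \<epsilon>" using i j by (simp add: algebra_simps)
    then show ?case by blast
  qed
  moreover obtain n where "real n * \<epsilon> > A - f 0" using e
    by (metis reals_Archimedean3)
  ultimately obtain i where "f i \<ge> f 0 + real n * \<epsilon>" by blast
  with \<open>real n * \<epsilon> > A - f 0\<close> bd[of i] show False by linarith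
qed

lemma lin_term_dep:
  assumes "\<forall>x\<in>V. \<nu> x = \<mu> x"
  shows "lin_term V c0 c \<nu> = lin_term V c0 c \<mu>"
  unfolding lin_term_def using assms by (auto intro!: sum.cong)


lemma L1:
  fixes x y \<epsilon> :: real and a b :: ereal
  assumes "ereal x < a" "a \<le> b" "\<not> (a \<le> ereal y \<and> ereal y \<le> b)"
    "((a \<le> ereal y \<and> ereal y \<le> b) \<or> (ereal x < a \<and> x + \<epsilon> \<le> y \<and> ereal y \<le> b)
       \<or> (ereal x > b \<and> x - \<epsilon> \<ge> y \<and> ereal y \<ge> a)) \<or>
     ((a \<le> ereal y \<and> ereal y \<le> b) \<or> (ereal x < a \<and> x \<le> y \<and> ereal y \<le> b)
       \<or> (ereal x > b \<and> x \<ge> y \<and> ereal y \<ge> a))"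
    "\<epsilon> \<ge> 0"
  shows "ereal y < a \<and> x \<le> y"
proof -
  have "\<not> ereal x > b" using assms(1,2) by auto
  then show ?thesis using assms(3,4,5) by (auto simp: not_le)
qed

lemma L2:
  fixes x y \<epsilon> :: real and a b :: ereal
  assumes "ereal x < a" "a \<le> b" "\<not> (a \<le> ereal y \<and> ereal y \<le> b)"
    "(a \<le> ereal y \<and> ereal y \<le> b) \<or> (ereal x < a \<and> x + \<epsilon> \<le> y \<and> ereal y \<le> b)
       \<or> (ereal x > b \<and> x - \<epsilon> \<ge> y \<and> ereal y \<ge> a)"
  shows "x + \<epsilon> \<le> y"
proof -
  have "\<not> ereal x > b" using assms(1,2) by auto
  then show ?thesis using assms(3,4) by auto
qed

lemma L3:
  fixes x y \<epsilon> :: real and a b :: ereal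
  assumes "ereal x > b" "a \<le> b" "\<not> (a \<le> ereal y \<and> ereal y \<le> b)"
    "((a \<le> ereal y \<and> ereal y \<le> b) \<or> (ereal x < a \<and> x + \<epsilon> \<le> y \<and> ereal y \<le> b)
       \<or> (ereal x > b \<and> x - \<epsilon> \<ge> y \<and> ereal y \<ge> a)) \<or>
     ((a \<le> ereal y \<and> ereal y \<le> b) \<or> (ereal x < a \<and> x \<le> y \<and> ereal y \<le> b)
       \<or> (ereal x > b \<and> x \<ge> y \<and> ereal y \<ge> a))"
    "\<epsilon> \<ge> 0"
  shows "ereal y > b \<and> y \<le> x"
proof -
  have "\<not> ereal x < a" using assms(1,2) by auto
  then show ?thesis using assms(3,4,5) by (auto simp: not_le)
qed

lemma L4:
  fixes x y \<epsilon> :: real and a b :: ereal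
  assumes "ereal x > b" "a \<le> b" "\<not> (a \<le> ereal y \<and> ereal y \<le> b)"
    "(a \<le> ereal y \<and> ereal y \<le> b) \<or> (ereal x < a \<and> x + \<epsilon> \<le> y \<and> ereal y \<le> b)
       \<or> (ereal x > b \<and> x - \<epsilon> \<ge> y \<and> ereal y \<ge> a)"
  shows "y \<le> x - \<epsilon>"
proof -
  have "\<not> ereal x < a" using assms(1,2) by auto
  then show ?thesis using assms(3,4) by auto
qed

theorem lemma5:
  fixes V :: "'v set" and c0 :: real and c :: "'v \<Rightarrow> real"
    and a b :: ereal and \<epsilon> :: real
  assumes "finite V"
    and "a \<noteq> \<infinity>" and "b \<noteq> -\<infinity>" and "a \<le> b"
    and "\<epsilon> > 0"
  shows "is_GAL V
    (\<lambda>\<nu>. a \<le> ereal (lin_term V c0 c \<nu>) \<and> ereal (lin_term V c0 c \<nu>) \<le> b)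
    (\<lambda>\<nu> \<nu>'. (a \<le> ereal (lin_term V c0 c \<nu>') \<and> ereal (lin_term V c0 c \<nu>') \<le> b)
       \<or> (ereal (lin_term V c0 c \<nu>) < a \<and> lin_term V c0 c \<nu> \<le> lin_term V c0 c \<nu>'
           \<and> ereal (lin_term V c0 c \<nu>') \<le> b)
       \<or> (ereal (lin_term V c0 c \<nu>) > b \<and> lin_term V c0 c \<nu> \<ge> lin_term V c0 c \<nu>'
           \<and> ereal (lin_term V c0 c \<nu>') \<ge> a))
    (\<lambda>\<nu> \<nu>'. (a \<le> ereal (lin_term V c0 c \<nu>') \<and> ereal (lin_term V c0 c \<nu>') \<le> b)
       \<or> (ereal (lin_term V c0 c \<nu>) < a \<and> lin_term V c0 c \<nu> + \<epsilon> \<le> lin_term V c0 c \<nu>'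
           \<and> ereal (lin_term V c0 c \<nu>') \<le> b)
       \<or> (ereal (lin_term V c0 c \<nu>) > b \<and> lin_term V c0 c \<nu> - \<epsilon> \<ge> lin_term V c0 c \<nu>'
           \<and> ereal (lin_term V c0 c \<nu>') \<ge> a))
    (\<lambda>\<nu>. True)" (is "is_GAL V ?base ?stay ?step ?conc")
proof -
  let ?t = "lin_term V c0 c"
  have dep: "\<And>\<nu> \<mu>. \<forall>x\<in>V. \<nu> x = \<mu> x \<Longrightarrow> ?t \<nu> = ?t \<mu>" by (rule lin_term_dep)
  have d2: "\<And>\<nu>1 \<nu>2 \<mu>1 \<mu>2. \<forall>x\<in>V. \<nu>1 x = \<mu>1 x \<and> \<nu>2 x = \<mu>2 x \<Longrightarrow> ?t \<nu>1 = ?t \<mu>1 \<and> ?t \<nu>2 = ?t \<mu>2"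
    using dep by blast
  have D1: "depends_on1 V ?base" unfolding depends_on1_def
  proof (intro allI impI)
    fix \<nu> \<mu> :: "'v \<Rightarrow> real" assume "\<forall>x\<in>V. \<nu> x = \<mu> x"
    then have "?t \<nu> = ?t \<mu>" by (rule dep)
    then show "?base \<nu> = ?base \<mu>" by simp
  qed
  have D2: "depends_on2 V ?stay" unfolding depends_on2_def
  proof (intro allI impI)
    fix \<nu>1 \<nu>2 \<mu>1 \<mu>2 :: "'v \<Rightarrow> real" assume "\<forall>x\<in>V. \<nu>1 x = \<mu>1 x \<and> \<nu>2 x = \<mu>2 x"
    then have "?t \<nu>1 = ?t \<mu>1 \<and> ?t \<nu>2 = ?t \<mu>2" by (rule d2)
    then show "?stay \<nu>1 \<nu>2 = ?stay \<mu>1 \<mu>2" by simp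
  qed
  have D3: "depends_on2 V ?step" unfolding depends_on2_def
  proof (intro allI impI)
    fix \<nu>1 \<nu>2 \<mu>1 \<mu>2 :: "'v \<Rightarrow> real" assume "\<forall>x\<in>V. \<nu>1 x = \<mu>1 x \<and> \<nu>2 x = \<mu>2 x"
    then have "?t \<nu>1 = ?t \<mu>1 \<and> ?t \<nu>2 = ?t \<mu>2" by (rule d2)
    then show "?step \<nu>1 \<nu>2 = ?step \<mu>1 \<mu>2" by simp
  qed
  have D4: "depends_on1 V ?conc" by (simp add: depends_on1_def)
  show ?thesis
    unfolding is_GAL_def
  proof (intro conjI allI impI D1 D2 D3 D4)
    fix \<alpha> :: "nat \<Rightarrow> 'v \<Rightarrow> real"
    let ?f = "\<lambda>i. ?t (\<alpha> i)"
    assume H: "True \<and> (\<forall>i. ?step (\<alpha> i) (\<alpha> (Suc i)) \<or> ?stay (\<alpha> i) (\<alpha> (Suc i))) \<and> (\<forall>i. \<exists>j\<ge>i. ?step (\<alpha> j) (\<alpha> (Suc j)))"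
    show "\<exists>k. ?base (\<alpha> k)"
    proof (rule ccontr)
      assume nb: "\<not> (\<exists>k. ?base (\<alpha> k))"
      have tr: "\<And>i. ?step (\<alpha> i) (\<alpha> (Suc i)) \<or> ?stay (\<alpha> i) (\<alpha> (Suc i))" using H by blast
      have inf: "\<And>i. \<exists>j\<ge>i. ?step (\<alpha> j) (\<alpha> (Suc j))" using H by blast
      have nbi: "\<And>i. \<not> (a \<le> ereal (?f i) \<and> ereal (?f i) \<le> b)" using nb by blast
      have eps0: "\<epsilon> \<ge> 0" using assms(5) by simp
      show False
      proof (cases "ereal (?f 0) < a")
        case True
        have lo: "ereal (?f i) < a \<and> ?f i \<le> ?f (Suc i)" for i
        proof (induction i)
          case 0 show ?case using L1[OF True assms(4) nbi tr eps0] True by blast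
        next
          case (Suc i)
          then have "ereal (?f (Suc i)) < a" using L1[OF _ assms(4) nbi tr eps0] by blast
          then show ?case using L1[OF _ assms(4) nbi tr eps0] by blast
        qed
        obtain A where A: "a = ereal A" using True assms(2) by (cases a) auto
        have lo': "?f i < A" for i using lo[of i] A by simp
        have mo: "?f i \<le> ?f (Suc i)" for i using lo[of i] by blast
        have st: "\<exists>j\<ge>i. ?f j + \<epsilon> \<le> ?f (Suc j)" for i
        proof -
          obtain j where j: "j \<ge> i" "?step (\<alpha> j) (\<alpha> (Suc j))" using inf[of i] by blast
          have "?f j + \<epsilon> \<le> ?f (Suc j)" using L2[OF _ assms(4) nbi j(2)] lo[of j] by blast
          then show ?thesis using j(1) by blast
        qed
        show False using unbounded_aux[OF assms(5) lo' mo st] .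
      next
        case False
        then have F0: "ereal (?f 0) > b" using nbi[of 0] by (meson not_le order.strict_iff_not)
        have hi: "ereal (?f i) > b \<and> ?f (Suc i) \<le> ?f i" for i
        proof (induction i)
          case 0 show ?case using L3[OF F0 assms(4) nbi tr eps0] F0 by blast
        next
          case (Suc i)
          then have "ereal (?f (Suc i)) > b" using L3[OF _ assms(4) nbi tr eps0] by blast
          then show ?case using L3[OF _ assms(4) nbi tr eps0] by blast
        qed
        obtain B where B: "b = ereal B" using F0 assms(3) by (cases b) auto
        have hi': "- ?f i < - B" for i using hi[of i] B by simp
        have mo: "- ?f i \<le> - ?f (Suc i)" for i using hi[of i] by simp
        have st: "\<exists>j\<ge>i. - ?f j + \<epsilon> \<le> - ?f (Suc j)" for i
        proof -
          obtain j where j: "j \<ge> i" "?step (\<alpha> j) (\<alpha> (Suc j))" using inf[of i] by blast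
          have "?f (Suc j) \<le> ?f j - \<epsilon>" using L4[OF _ assms(4) nbi j(2)] hi[of j] by blast
          then have "- ?f j + \<epsilon> \<le> - ?f (Suc j)" by simp
          then show ?thesis using j(1) by blast
        qed
        show False using unbounded_aux[of \<epsilon> "\<lambda>i. - ?f i" "- B", OF assms(5) hi' mo st] .
      qed
    qed
  qed simp
qed

end
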